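(* Under the standing assumptions below, let $t_0=\langle C_\Theta/4a^3\lambda\rangle$. There exist $\alpha,\beta>0$ such that for every unit vector $w\in\mathbb{C}^N$ and every $Q\in\bigcup_{t\in(0,t_0]}\Delta_t$ there is a collection $\{Q_k\}_k\subseteq\Delta_{(0,1]}$ of pairwise disjoint subsets of $Q$ such that $E_Q:=Q\setminus\bigcup_kQ_k$ satisfies $\mu(E_Q)>\beta\mu(Q)$, and $E_Q^*:=C(Q)\setminus\bigcup_kC(Q_k)$ has the property that $\mathrm{Re}\left(w,\frac{1}{\mu(Q')}\int_{Q'}f^w_Q\,d\mu\right)\ge\alpha$ and $\frac{1}{\mu(Q')}\int_{Q'}|f^w_Q|\,d\mu\le\frac{1}{\alpha}$ for all $Q'\in\Delta_{(0,1]}$ with $Q'\subseteq Q$ and $C(Q')\cap E_Q^*\neq\emptyset$.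
   Context: $M$ is a smooth connected complete Riemannian manifold with geodesic distance $\rho$, Riemannian measure $\mu$, satisfying $(\mathrm{E}_{\mathrm{loc}})$ (constants $c\ge1$, $\kappa,\lambda\ge0$: $0<V(x,\alpha r)\le c\alpha^\kappa e^{\lambda\alpha r}V(x,r)<\infty$ for $\alpha\ge1$) and $(\mathrm{P}_{\mathrm{loc}})$ (local $L^2$ Poincaré inequality on balls of radius $\le1$). Operators $\Gamma,B_1,B_2$ on $L^2(M;\mathbb{C}^N)$ satisfy (H1)–(H8): (H1) $\Gamma$ densely defined, closed, nilpotent; (H2) $B_1,B_2$ bounded with $\mathrm{Re}\langle B_1u,u\rangle\ge\kappa_1\|u\|^2$ on $\mathsf{R}(\Gamma^* )$ and $\mathrm{Re}\langle B_2u,u\rangle\ge\kappa_2\|u\|^2$ on $\mathsf{R}(\Gamma)$; (H3) $\Gamma^*B_2B_1\Gamma^*=0$ on $\mathsf{D}(\Gamma^* )$, $\Gamma B_1B_2\Gamma=0$ on $\mathsf{D}(\Gamma)$; (H4) Hilbert space $L^2(M;\mathbb{C}^N)$; (H5) $B_i$ multiplication by $L^\infty(M;\mathcal{L}(\mathbb{C}^N))$ functions; (H6) for $\eta\in C_c^\infty(M)$, $\mathsf{D}(\Gamma)\subseteq\mathsf{D}(\Gamma\eta I)$ and $|[\Gamma,\eta I]u(x)|\le C_\Gamma|\nabla\eta(x)||u(x)|$; (H7) $|\int_B\Gamma u|\le c\mu(B)^{1/2}\|u\|$ and $|\int_B\Gamma^*v|\le c\mu(B)^{1/2}\|v\|$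 for $u\in\mathsf{D}(\Gamma)$, $v\in\mathsf{D}(\Gamma^* )$ compactly supported in a ball of radius $\le1$; (H8) $\|u\|_{W^{1,2}(M;\mathbb{C}^N)}\le c\|\Pi u\|$ on $(\mathsf{R}(\Gamma)\cup\mathsf{R}(\Gamma^* ))\cap\mathsf{D}(\Pi)$. $\Pi=\Gamma+\Gamma^*$, $\Gamma_B^*=B_1\Gamma^*B_2$, $\Pi_B=\Gamma+\Gamma_B^*$, $R_t^B=(I+it\Pi_B)^{-1}$, $\Theta_t^B=t\Gamma_B^*(I+t^2\Pi_B^2)^{-1}$. $C_\Theta>0$ is a constant for which $\|1_EU_t1_F\|\le c_K\langle|t|/\rho(E,F)\rangle^Ke^{-C_\Theta\rho(E,F)/|t|}$ for all $K\ge0$, closed $E,F$ and $U_t\in\{R_t^B,(I+t^2\Pi_B^2)^{-1},t\Pi_B(I+t^2\Pi_B^2)^{-1},\Theta_t^B\}$. A truncated dyadic cube structure $\Delta_{(0,1]}$ is fixed (constants $\delta,\eta\in(0,1)$, $a_0<a_1$; levels $\Delta_t$ for $\delta^{k+1}<t\le\delta^k$; $l(Q)=\delta^k$; $C(Q)=Q\times(0,l(Q)]$; $B(x_Q,a_0l(Q))\subseteq Q\subseteq B(x_Q,a_1l(Q))$; levels disjoint, covering a.e., nested; thin boundary $\mu(\{x\in Q:\rho(x,M\setminus Q)\le sl(Q)\})\le cs^\eta\mu(Q)$); $a=\max\{1,a_1/\delta\}$, $\langle x\rangle=\min\{1,x\}$. For each $Q$: $B_Q$ a ball of radius $a_1l(Q)$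 with $(a_0/a_1)B_Q\subseteq Q\subseteq B_Q$; $\eta_Q:M\to[0,1]$ smooth, supported in $3B_Q$, equal to $1$ on $2B_Q$; $w_Q=\eta_Qw$; $f^w_{Q,\epsilon}=w_Q-i\epsilon l(Q)\Gamma R^B_{\epsilon l(Q)}w_Q$. Let $c$ be a constant such that for all unit $w$, $Q\in\Delta_{(0,1]}$, $\epsilon>0$: $\|f^w_{Q,\epsilon}\|\le c\mu(Q)^{1/2}$, $\iint_{C(Q)}|\Theta_t^Bf^w_{Q,\epsilon}|^2d\mu\,dt/t\le c\epsilon^{-2}\mu(Q)$, and $|\mu(Q)^{-1}\int_Qf^w_{Q,\epsilon}-w|<c\epsilon^{\eta/2}$. Fix $\epsilon=(1/(2c))^{2/\eta}$ and $f^w_Q=f^w_{Q,\epsilon}$. $(\cdot,\cdot)$ is the inner product on $\mathbb{C}^N$. *)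

theory Defs
  imports "HOL-Analysis.Analysis"
begin

definition cinner :: "complex^'n \<Rightarrow> complex^'n \<Rightarrow> complex" where
  "cinner u v = (\<Sum>i\<in>UNIV. u$i * cnj (v$i))"

definition E_loc :: "'a::metric_space measure \<Rightarrow> real \<Rightarrow> real \<Rightarrow> real \<Rightarrow> bool" where
  "E_loc M c \<kappa> lam \<longleftrightarrow> c \<ge> 1 \<and> \<kappa> \<ge> 0 \<and> lam \<ge> 0 \<and>
     (\<forall>x r. r > 0 \<longrightarrow> 0 < emeasure M (ball x r) \<and> emeasure M (ball x r) < \<infinity>) \<and>
     (\<forall>x r \<alpha>. r > 0 \<and> \<alpha> \<ge> 1 \<longrightarrow>
        measure M (ball x (\<alpha> * r)) \<le> c * \<alpha> powr \<kappa> * exp (lam * \<alpha> * r) * measure M (ball x r))"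

text \<open>Truncated dyadic cube structure: D k is the level Delta_t for delta^(k+1) < t <= delta^k,
  cubes of level k have side length l(Q) = delta^k and centre xc k Q.\<close>
definition dyadic_structure ::
  "'a::metric_space measure \<Rightarrow> real \<Rightarrow> real \<Rightarrow> real \<Rightarrow> real \<Rightarrow> (nat \<Rightarrow> 'a set set) \<Rightarrow> (nat \<Rightarrow> 'a set \<Rightarrow> 'a) \<Rightarrow> bool" where
  "dyadic_structure M \<delta> \<eta> a0 a1 D xc \<longleftrightarrow>
     0 < \<delta> \<and> \<delta> < 1 \<and> 0 < \<eta> \<and> \<eta> < 1 \<and> 0 < a0 \<and> a0 < a1 \<and>
     (\<forall>k. \<forall>Q\<in>D k. Q \<in> sets M \<and> ball (xc k Q) (a0 * \<delta>^k) \<subseteq> Q \<and> Q \<subseteq> ball (xc k Q) (a1 * \<delta>^k)) \<and>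
     (\<forall>k. \<forall>Q\<in>D k. \<forall>Q'\<in>D k. Q \<noteq> Q' \<longrightarrow> Q \<inter> Q' = {}) \<and>
     (\<forall>k. AE y in M. y \<in> \<Union>(D k)) \<and>
     (\<forall>k k' Q Q'. k \<le> k' \<and> Q \<in> D k \<and> Q' \<in> D k' \<longrightarrow> Q' \<subseteq> Q \<or> Q' \<inter> Q = {}) \<and>
     (\<exists>C. \<forall>k. \<forall>Q\<in>D k. \<forall>s>0.
        measure M {y\<in>Q. -Q \<noteq> {} \<and> infdist y (-Q) \<le> s * \<delta>^k} \<le> C * s powr \<eta> * measure M Q)"

definition tent :: "real \<Rightarrow> nat \<Rightarrow> 'a set \<Rightarrow> ('a \<times> real) set" where
  "tent \<delta> k Q = Q \<times> {0<..\<delta>^k}"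

end

theory Submission
  imports Defs
begin


lemma cinner_norm_bound:
  fixes w v :: "complex^'n"
  shows "norm (cinner w v) \<le> norm w * norm v"
proof -
  have "norm (cinner w v) \<le> (\<Sum>i\<in>UNIV. norm (w$i * cnj (v$i)))"
    unfolding cinner_def by (rule norm_sum)
  also have "\<dots> = (\<Sum>i\<in>UNIV. \<bar>norm (w$i)\<bar> * \<bar>norm (v$i)\<bar>)"
    by (simp add: norm_mult)
  also have "\<dots> \<le> L2_set (\<lambda>i. norm (w$i)) UNIV * L2_set (\<lambda>i. norm (v$i)) UNIV"
    by (rule L2_set_mult_ineq)
  finally show ?thesis by (simp add: norm_vec_def)
qed

lemma cinner_self_Re:
  fixes w :: "complex^'n"
  shows "Re (cinner w w) = (norm w)^2"
proof -
  have "Re (cinner w w) = (\<Sum>i\<in>UNIV. (norm (w$i))^2)"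
    unfolding cinner_def Re_sum by (simp add: complex_mult_cnj cmod_power2)
  also have "\<dots> = (norm w)^2"
    by (simp add: norm_vec_def L2_set_def sum_nonneg)
  finally show ?thesis .
qed

lemma cinner_add_right: "cinner w (u + v) = cinner w u + cinner w v"
  unfolding cinner_def by (simp add: sum.distrib algebra_simps)

lemma cinner_diff_right: "cinner w (u - v) = cinner w u - cinner w v"
  unfolding cinner_def by (simp add: sum_subtractf algebra_simps)

lemma cinner_scaleR_right: "cinner w (r *\<^sub>R v) = of_real r * cinner w v"
proof -
  have "\<And>i. (r *\<^sub>R v) $ i = of_real r * v $ i" by (subst vector_scaleR_component) (simp add: scaleR_conv_of_real)
  then show ?thesis unfolding cinner_def by (simp add: sum_distrib_left algebra_simps)
qed

lemma bl_Re_cinner: "bounded_linear (\<lambda>v::complex^'n. Re (cinner w v))"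
proof (rule bounded_linear_intro[where K="norm w"])
  show "Re (cinner w (x + y)) = Re (cinner w x) + Re (cinner w y)" for x y
    by (simp add: cinner_add_right)
  show "Re (cinner w (r *\<^sub>R x)) = r *\<^sub>R Re (cinner w x)" for r x
    by (simp add: cinner_scaleR_right)
  show "norm (Re (cinner w x)) \<le> norm x * norm w" for x
    using cinner_norm_bound[of w x] abs_Re_le_cmod[of "cinner w x"] by (simp add: mult.commute)
qed




lemma le_sq1: "(t::real) \<le> t^2 + 1"
proof (cases "t \<le> 1")
  case True
  then show ?thesis by (smt (verit) zero_le_power2)
next
  case False
  then have "t \<le> t * t" by (simp add: mult_le_cancel_left1)
  then show ?thesis by (simp add: power2_eq_square)
qed

lemma set_intg_bound:
  fixes f :: "'a \<Rightarrow> 'b::{banach, second_countable_topology}"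
    and h :: "'a \<Rightarrow> 'c::{banach, second_countable_topology}"
  assumes hm: "h \<in> borel_measurable M" and f2: "integrable M (\<lambda>x. (norm (f x))^2)"
    and hb: "\<And>x. norm (h x) \<le> norm (f x)" and A: "A \<in> sets M" "emeasure M A < \<infinity>"
  shows "set_integrable M A h"
  unfolding set_integrable_def
proof (rule Bochner_Integration.integrable_bound)
  have "integrable M (\<lambda>x. indicator A x * (norm (f x))^2 + indicator A x)"
  proof (rule Bochner_Integration.integrable_add)
    show "integrable M (\<lambda>x. indicat_real A x * (norm (f x))\<^sup>2)"
      using integrable_mult_indicator[OF A(1) f2] by simp
    show "integrable M (indicat_real A)"
      using A by (simp add: integrable_real_indicator)
  qed
  then show "integrable M (\<lambda>x. indicator A x * ((norm (f x))^2 + 1))"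
    by (simp add: algebra_simps)
  show "(\<lambda>x. indicat_real A x *\<^sub>R h x) \<in> borel_measurable M"
    using hm A by (intro borel_measurable_scaleR borel_measurable_indicator) auto
  show "AE x in M. norm (indicat_real A x *\<^sub>R h x) \<le> norm (indicator A x * ((norm (f x))^2 + 1))"
  proof (rule AE_I2)
    fix x
    have "norm (f x) \<le> (norm (f x))^2 + 1"
      by (rule le_sq1)
    then show "norm (indicat_real A x *\<^sub>R h x) \<le> norm (indicator A x * ((norm (f x))^2 + 1))"
      using hb[of x] by (auto simp: indicator_def)
  qed
qed




lemma SI_nonneg:
  fixes f :: "'a \<Rightarrow> real"
  assumes "\<And>x. 0 \<le> f x"
  shows "0 \<le> set_lebesgue_integral M A f"
  unfolding set_lebesgue_integral_def
  using assms by (intro Bochner_Integration.integral_nonneg) (simp add: indicator_def)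

lemma SI_le_integral:
  fixes f :: "'a \<Rightarrow> real"
  assumes "\<And>x. 0 \<le> f x" "integrable M f" "A \<in> sets M"
  shows "set_lebesgue_integral M A f \<le> (\<integral>x. f x \<partial>M)"
  unfolding set_lebesgue_integral_def
proof (rule integral_mono)
  show "integrable M (\<lambda>x. indicat_real A x *\<^sub>R f x)"
    using assms by (intro integrable_mult_indicator)
  show "integrable M f" by fact
  show "indicat_real A x *\<^sub>R f x \<le> f x" for x
    using assms(1)[of x] by (simp add: indicator_def)
qed

lemma amgm_SI:
  fixes n :: "'a \<Rightarrow> real"
  assumes L: "L > 0" and A: "A \<in> sets M" "emeasure M A < \<infinity>"
    and i1: "set_integrable M A n" and i2: "set_integrable M A (\<lambda>x. (n x)^2)"
  shows "set_lebesgue_integral M A n \<le> (1/(2*L)) * set_lebesgue_integral M A (\<lambda>x. (n x)^2) + (L/2) * measure M A"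
proof -
  have ic: "set_integrable M A (\<lambda>x. L/2)"
  proof -
    have "integrable M (\<lambda>x. L/2 * indicat_real A x)"
      using integrable_real_indicator[OF A] by (rule Bochner_Integration.integrable_mult_right)
    then show ?thesis unfolding set_integrable_def by (simp add: mult.commute)
  qed
  have i3: "set_integrable M A (\<lambda>x. (1/(2*L)) * (n x)^2)"
    using i2 by (rule set_integrable_mult_right)
  have pw: "n x \<le> (1/(2*L)) * (n x)^2 + L/2" for x
  proof -
    have "0 \<le> (n x - L)^2" by simp
    then have "2 * L * n x \<le> (n x)^2 + L^2" by (simp add: power2_eq_square algebra_simps)
    then show ?thesis using L by (simp add: field_simps power2_eq_square)
  qed
  have "set_lebesgue_integral M A n \<le> set_lebesgue_integral M A (\<lambda>x. (1/(2*L)) * (n x)^2 + L/2)"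
    using i1 set_integral_add(1)[OF i3 ic] pw by (intro set_integral_mono) auto
  also have "\<dots> = set_lebesgue_integral M A (\<lambda>x. (1/(2*L)) * (n x)^2) + set_lebesgue_integral M A (\<lambda>x. L/2)"
    by (rule set_integral_add(2)[OF i3 ic])
  also have "\<dots> = (1/(2*L)) * set_lebesgue_integral M A (\<lambda>x. (n x)^2) + (L/2) * measure M A"
    using A by (simp add: set_integral_mult_right set_integral_const[OF A(1)] less_top[symmetric])
  finally show ?thesis .
qed




lemma finite_step:
  fixes g n :: "'a \<Rightarrow> real" and F :: "'a set set"
  assumes nn: "\<And>x. 0 \<le> n x" and gn: "\<And>x. g x \<le> n x"
    and intg: "\<And>A. A \<in> sets M \<Longrightarrow> emeasure M A < \<infinity> \<Longrightarrow>
        set_integrable M A g \<and> set_integrable M A n \<and> set_integrable M A (\<lambda>x. (n x)^2)"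
    and int2: "integrable M (\<lambda>x. (n x)^2)"
    and tot: "(\<integral>x. (n x)^2 \<partial>M) \<le> c^2 * measure M Q"
    and c: "c > 0" and Q: "Q \<in> sets M" "emeasure M Q < \<infinity>"
    and hQ: "set_lebesgue_integral M Q g > measure M Q / 2"
    and fin: "finite F" and disj: "pairwise disjnt F"
    and sub: "\<And>P. P \<in> F \<Longrightarrow> P \<in> sets M \<and> P \<subseteq> Q"
    and bad: "\<And>P. P \<in> F \<Longrightarrow> set_lebesgue_integral M P g < \<alpha> * measure M P \<or>
                              measure M P < \<alpha> * set_lebesgue_integral M P n"
    and \<alpha>: "0 < \<alpha>" "\<alpha> \<le> 1/8" "\<alpha> \<le> 1/(64*c^3)"
  shows "measure M (Q - \<Union>F) > measure M Q / (16*c^2)"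
proof -
  define L where "L = 8*c^2"
  have L: "L > 0" using c by (simp add: L_def)
  define U where "U = \<Union>F"
  have Usets: "U \<in> sets M" unfolding U_def using fin sub by auto
  have UQ: "U \<subseteq> Q" unfolding U_def using sub by auto
  have fm: "A \<in> sets M \<Longrightarrow> A \<subseteq> Q \<Longrightarrow> emeasure M A < \<infinity>" for A
    using Q emeasure_mono[of A Q M] by (meson le_less_trans)
  have Pfm: "P \<in> F \<Longrightarrow> P \<in> sets M \<and> emeasure M P < \<infinity>" for P
    using sub fm by blast
  have Ufm: "emeasure M U < \<infinity>" using fm Usets UQ by blast
  have QU: "Q - U \<in> sets M" "emeasure M (Q - U) < \<infinity>" using Q Usets fm by auto
  have dfam: "disjoint_family_on (\<lambda>P. P) F"
    using disj unfolding disjoint_family_on_def pairwise_def disjnt_def by auto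
  note ints = intg[OF Q] intg[OF Usets Ufm] intg[OF QU]
  have sumU: "set_lebesgue_integral M U h = (\<Sum>P\<in>F. set_lebesgue_integral M P h)"
    if "\<And>P. P \<in> F \<Longrightarrow> set_integrable M P h" for h :: "'a \<Rightarrow> real"
    using set_integral_finite_Union[OF fin dfam, of M h] that sub unfolding U_def by simp
  have mU: "measure M U = (\<Sum>P\<in>F. measure M P)"
    unfolding U_def using fin disj Pfm
    by (intro measure_Union') (auto simp: fmeasurable_def)
  have perP: "set_lebesgue_integral M P g \<le> \<alpha> * measure M P
      + (1/(2*L)) * set_lebesgue_integral M P (\<lambda>x. (n x)^2)
      + (L/2) * \<alpha> * set_lebesgue_integral M P n" if P: "P \<in> F" for P
  proof -
    note iP = intg[OF conjunct1[OF Pfm[OF P]] conjunct2[OF Pfm[OF P]]]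
    have n0: "0 \<le> set_lebesgue_integral M P n" by (rule SI_nonneg[OF nn])
    have n20: "0 \<le> set_lebesgue_integral M P (\<lambda>x. (n x)^2)" by (rule SI_nonneg) simp
    have m0: "0 \<le> measure M P" by simp
    from bad[OF P] show ?thesis
    proof
      assume "set_lebesgue_integral M P g < \<alpha> * measure M P"
      moreover have "0 \<le> (1/(2*L)) * set_lebesgue_integral M P (\<lambda>x. (n x)^2)"
        using L n20 by simp
      moreover have "0 \<le> (L/2) * \<alpha> * set_lebesgue_integral M P n"
        using L \<alpha> n0 by simp
      ultimately show ?thesis by linarith
    next
      assume b: "measure M P < \<alpha> * set_lebesgue_integral M P n"
      have "set_lebesgue_integral M P g \<le> set_lebesgue_integral M P n"
        using iP gn by (intro set_integral_mono) auto
      also have "\<dots> \<le> (1/(2*L)) * set_lebesgue_integral M P (\<lambda>x. (n x)^2) + (L/2) * measure M P"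
        using amgm_SI[OF L conjunct1[OF Pfm[OF P]] conjunct2[OF Pfm[OF P]]] iP by blast
      also have "\<dots> \<le> (1/(2*L)) * set_lebesgue_integral M P (\<lambda>x. (n x)^2) + (L/2) * (\<alpha> * set_lebesgue_integral M P n)"
        using b L by simp
      finally have X: "set_lebesgue_integral M P g \<le> (1/(2*L)) * set_lebesgue_integral M P (\<lambda>x. (n x)^2) + (L/2) * (\<alpha> * set_lebesgue_integral M P n)" .
      have Y: "0 \<le> \<alpha> * measure M P" using \<alpha> m0 by simp
      have Z: "(L/2) * (\<alpha> * set_lebesgue_integral M P n) = (L/2) * \<alpha> * set_lebesgue_integral M P n" by simp
      from X Y Z show ?thesis by linarith
    qed
  qed
  have sumP: "set_lebesgue_integral M U g \<le> \<alpha> * measure M U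
      + (1/(2*L)) * set_lebesgue_integral M U (\<lambda>x. (n x)^2)
      + (L/2) * \<alpha> * set_lebesgue_integral M U n"
  proof -
    have iF: "\<And>P. P \<in> F \<Longrightarrow> set_integrable M P g \<and> set_integrable M P n \<and> set_integrable M P (\<lambda>x. (n x)^2)"
      using intg Pfm by blast
    have "set_lebesgue_integral M U g = (\<Sum>P\<in>F. set_lebesgue_integral M P g)"
      using iF by (intro sumU) auto
    also have "\<dots> \<le> (\<Sum>P\<in>F. \<alpha> * measure M P
      + (1/(2*L)) * set_lebesgue_integral M P (\<lambda>x. (n x)^2)
      + (L/2) * \<alpha> * set_lebesgue_integral M P n)"
      using perP by (rule sum_mono)
    also have "\<dots> = \<alpha> * (\<Sum>P\<in>F. measure M P)
      + (1/(2*L)) * (\<Sum>P\<in>F. set_lebesgue_integral M P (\<lambda>x. (n x)^2))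
      + (L/2) * \<alpha> * (\<Sum>P\<in>F. set_lebesgue_integral M P n)"
      by (simp add: sum.distrib sum_distrib_left)
    also have "\<dots> = \<alpha> * measure M U
      + (1/(2*L)) * set_lebesgue_integral M U (\<lambda>x. (n x)^2)
      + (L/2) * \<alpha> * set_lebesgue_integral M U n"
      using iF by (simp add: mU sumU)
    finally show ?thesis .
  qed
  have Qsplit: "set_lebesgue_integral M Q h = set_lebesgue_integral M (Q - U) h + set_lebesgue_integral M U h"
    if "set_integrable M (Q - U) h" "set_integrable M U h" for h :: "'a \<Rightarrow> real"
  proof -
    have "Q = (Q - U) \<union> U" using UQ by auto
    then have "set_lebesgue_integral M Q h = set_lebesgue_integral M ((Q - U) \<union> U) h" by simp
    also have "\<dots> = set_lebesgue_integral M (Q - U) h + set_lebesgue_integral M U h"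
      using that by (intro set_integral_Un) auto
    finally show ?thesis .
  qed
  have gQU: "set_lebesgue_integral M (Q - U) g \<le> (1/(2*L)) * set_lebesgue_integral M (Q - U) (\<lambda>x. (n x)^2) + (L/2) * measure M (Q - U)"
  proof -
    have "set_lebesgue_integral M (Q - U) g \<le> set_lebesgue_integral M (Q - U) n"
      using ints gn by (intro set_integral_mono) auto
    also have "\<dots> \<le> (1/(2*L)) * set_lebesgue_integral M (Q - U) (\<lambda>x. (n x)^2) + (L/2) * measure M (Q - U)"
      using amgm_SI[OF L QU] ints by blast
    finally show ?thesis .
  qed
  have n2Q: "set_lebesgue_integral M (Q - U) (\<lambda>x. (n x)^2) + set_lebesgue_integral M U (\<lambda>x. (n x)^2) \<le> c^2 * measure M Q"
  proof -
    have "set_lebesgue_integral M (Q - U) (\<lambda>x. (n x)^2) + set_lebesgue_integral M U (\<lambda>x. (n x)^2)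
        = set_lebesgue_integral M Q (\<lambda>x. (n x)^2)"
      using ints by (intro Qsplit[symmetric]) auto
    also have "\<dots> \<le> (\<integral>x. (n x)^2 \<partial>M)"
      using int2 Q by (intro SI_le_integral) auto
    finally show ?thesis using tot by linarith
  qed
  have nU: "set_lebesgue_integral M U n \<le> c * measure M Q"
  proof -
    have "set_lebesgue_integral M Q n = set_lebesgue_integral M (Q - U) n + set_lebesgue_integral M U n"
      using ints by (intro Qsplit) auto
    moreover have "0 \<le> set_lebesgue_integral M (Q - U) n" by (rule SI_nonneg[OF nn])
    moreover have "set_lebesgue_integral M Q n \<le> (1/(2*c)) * set_lebesgue_integral M Q (\<lambda>x. (n x)^2) + (c/2) * measure M Q"
      using amgm_SI[OF c Q] ints by blast
    moreover have "set_lebesgue_integral M Q (\<lambda>x. (n x)^2) \<le> c^2 * measure M Q"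
      using SI_le_integral[of "\<lambda>x. (n x)^2" M Q] int2 Q tot by simp
    moreover have "(1/(2*c)) * (c^2 * measure M Q) = (c/2) * measure M Q"
      using c by (simp add: field_simps power2_eq_square)
    ultimately show ?thesis
    proof -
      assume A1: "set_lebesgue_integral M Q n = set_lebesgue_integral M (Q - U) n + set_lebesgue_integral M U n"
        and A2: "0 \<le> set_lebesgue_integral M (Q - U) n"
        and A3: "set_lebesgue_integral M Q n \<le> (1/(2*c)) * set_lebesgue_integral M Q (\<lambda>x. (n x)^2) + (c/2) * measure M Q"
        and A4: "set_lebesgue_integral M Q (\<lambda>x. (n x)^2) \<le> c^2 * measure M Q"
        and A5: "(1/(2*c)) * (c^2 * measure M Q) = (c/2) * measure M Q"
      have "(1/(2*c)) * set_lebesgue_integral M Q (\<lambda>x. (n x)^2) \<le> (1/(2*c)) * (c^2 * measure M Q)"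
        using A4 c by (intro mult_left_mono) auto
      with A1 A2 A3 A5 have "set_lebesgue_integral M U n \<le> (c/2) * measure M Q + (c/2) * measure M Q" by linarith
      then show ?thesis by simp
    qed
  qed
  have mUQ: "measure M U \<le> measure M Q"
    using UQ Usets Q by (intro measure_mono_fmeasurable) (auto simp: fmeasurable_def)
  define m where "m = measure M Q"
  define x where "x = measure M (Q - U)"
  have m0: "0 \<le> m" unfolding m_def by simp
  have gQ: "set_lebesgue_integral M Q g = set_lebesgue_integral M (Q - U) g + set_lebesgue_integral M U g"
    using ints by (intro Qsplit) auto
  have "m / 2 < (1/(2*L)) * (set_lebesgue_integral M (Q - U) (\<lambda>x. (n x)^2) + set_lebesgue_integral M U (\<lambda>x. (n x)^2))
      + (L/2) * x + \<alpha> * measure M U + (L/2) * \<alpha> * set_lebesgue_integral M U n"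
    using hQ gQ gQU sumP unfolding m_def x_def by (simp add: algebra_simps)
  also have "\<dots> \<le> (1/(2*L)) * (c^2 * m) + (L/2) * x + \<alpha> * m + (L/2) * \<alpha> * (c * m)"
  proof -
    have "(1/(2*L)) * (set_lebesgue_integral M (Q - U) (\<lambda>x. (n x)^2) + set_lebesgue_integral M U (\<lambda>x. (n x)^2)) \<le> (1/(2*L)) * (c^2 * m)"
      using n2Q L unfolding m_def by (intro mult_left_mono) auto
    moreover have "\<alpha> * measure M U \<le> \<alpha> * m" using mUQ \<alpha> unfolding m_def by simp
    moreover have "(L/2) * \<alpha> * set_lebesgue_integral M U n \<le> (L/2) * \<alpha> * (c * m)"
      using nU L \<alpha> unfolding m_def by (intro mult_left_mono) auto
    ultimately show ?thesis by linarith
  qed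
  also have "(1/(2*L)) * (c^2 * m) = m / 16"
    using c unfolding L_def by (simp add: field_simps power2_eq_square)
  also have "(L/2) * x = 4 * c^2 * x" unfolding L_def by simp
  also have "(L/2) * \<alpha> * (c * m) = 4 * (c^3 * \<alpha>) * m" unfolding L_def by (simp add: power2_eq_square power3_eq_cube)
  finally have ineq: "m / 2 < m / 16 + 4 * c^2 * x + \<alpha> * m + 4 * (c^3 * \<alpha>) * m" .
  have a1: "\<alpha> * m \<le> m / 8" using mult_right_mono[OF \<alpha>(2) m0] by simp
  have "c^3 * \<alpha> \<le> 1/64"
    using \<alpha>(3) c by (simp add: field_simps)
  then have a2: "4 * (c^3 * \<alpha>) * m \<le> m / 16" using mult_right_mono[OF _ m0, of "c^3 * \<alpha>" "1/64"] by simp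
  from ineq a1 a2 have "m / 4 < 4 * c^2 * x" by linarith
  then have "m / (16 * c^2) < x" using c by (simp add: field_simps)
  then show ?thesis unfolding m_def x_def U_def .
qed




lemma countable_pos_disjoint:
  assumes disj: "pairwise disjnt S"
    and S: "\<And>P. P \<in> S \<Longrightarrow> P \<in> sets M \<and> P \<subseteq> Q \<and> measure M P > 0"
    and Q: "Q \<in> sets M" "emeasure M Q < \<infinity>"
  shows "countable S"
proof -
  define T where "T n = {P\<in>S. measure M P > 1 / real (Suc n)}" for n
  have ST: "S = (\<Union>n. T n)"
  proof
    show "S \<subseteq> (\<Union>n. T n)"
    proof
      fix P assume P: "P \<in> S"
      then have "measure M P > 0" using S by blast
      then obtain m where m: "m > 0" "inverse (real m) < measure M P"
        using ex_inverse_of_nat_less by blast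
      then obtain n where "m = Suc n" using not0_implies_Suc by blast
      with m have "inverse (real (Suc n)) < measure M P" by simp
      then have "P \<in> T n" unfolding T_def using P by (simp add: inverse_eq_divide)
      then show "P \<in> (\<Union>n. T n)" by blast
    qed
  qed (auto simp: T_def)
  have "finite (T n)" for n
  proof -
    have "finite (T n) \<and> card (T n) \<le> nat (ceiling (real (Suc n) * measure M Q))"
    proof (rule finite_if_finite_subsets_card_bdd)
      fix G assume G: "G \<subseteq> T n" "finite G"
      have fmG: "\<And>P. P \<in> G \<Longrightarrow> P \<in> fmeasurable M"
      proof -
        fix P assume "P \<in> G"
        then have "P \<in> sets M" "P \<subseteq> Q" using G S unfolding T_def by auto
        then have "emeasure M P \<le> emeasure M Q" using Q(1) by (intro emeasure_mono)
        then have "emeasure M P < \<infinity>" using Q(2) by (meson le_less_trans)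
        then show "P \<in> fmeasurable M" using \<open>P \<in> sets M\<close> by (intro fmeasurableI)
      qed
      have "real (card G) * (1 / real (Suc n)) = (\<Sum>P\<in>G. 1 / real (Suc n))" by simp
      also have "\<dots> \<le> (\<Sum>P\<in>G. measure M P)"
        using G unfolding T_def by (intro sum_mono) auto
      also have "\<dots> = measure M (\<Union>G)"
      proof -
        have "G \<subseteq> S" using G unfolding T_def by auto
        then have "pairwise disjnt G" using disj by (rule pairwise_subset[rotated])
        then show ?thesis using G fmG by (intro measure_Union'[symmetric]) auto
      qed
      also have "\<dots> \<le> measure M Q"
        using G S Q unfolding T_def
        by (intro measure_mono_fmeasurable) (auto simp: fmeasurable_def)
      finally have "real (card G) \<le> real (Suc n) * measure M Q"
        by (simp add: field_simps)
      then show "card G \<le> nat (ceiling (real (Suc n) * measure M Q))"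
        by linarith
    qed
    then show ?thesis by blast
  qed
  then show ?thesis unfolding ST by (intro countable_UN) (auto intro: countable_finite)
qed

lemma approx_union:
  assumes cS: "countable S" and S: "\<And>P. P \<in> S \<Longrightarrow> P \<in> sets M \<and> P \<subseteq> Q"
    and Q: "Q \<in> sets M" "emeasure M Q < \<infinity>" and e: "e > 0"
  shows "\<exists>F. F \<subseteq> S \<and> finite F \<and> measure M (\<Union>S) < measure M (\<Union>F) + e"
proof (cases "S = {}")
  case True
  then show ?thesis using e by (intro exI[of _ "{}"]) auto
next
  case False
  define g where "g = from_nat_into S"
  have rg: "range g = S" unfolding g_def using range_from_nat_into[OF False cS] .
  define B where "B i = \<Union>(g ` {..<i})" for i
  have BU: "(\<Union>i. B i) = \<Union>S"
  proof
    show "(\<Union>i. B i) \<subseteq> \<Union>S" unfolding B_def using rg by auto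
    show "\<Union>S \<subseteq> (\<Union>i. B i)"
    proof
      fix x assume "x \<in> \<Union>S"
      then obtain P where "P \<in> S" "x \<in> P" by auto
      then obtain i where "g i = P" using rg by auto
      then have "x \<in> B (Suc i)" using \<open>x \<in> P\<close> unfolding B_def by auto
      then show "x \<in> (\<Union>i. B i)" by auto
    qed
  qed
  have gS: "g i \<in> S" for i using rg by auto
  have rB: "range B \<subseteq> sets M" unfolding B_def using gS S by auto
  have iB: "incseq B" unfolding incseq_def B_def by (intro allI impI Union_mono image_mono) auto
  have "emeasure M (\<Union>i. B i) \<le> emeasure M Q"
    using BU S Q by (intro emeasure_mono) auto
  then have fin: "emeasure M (\<Union>i. B i) \<noteq> \<infinity>" using Q by (auto simp: top_unique)
  have "(\<lambda>i. measure M (B i)) \<longlonglongrightarrow> measure M (\<Union>i. B i)"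
    by (rule Lim_measure_incseq[OF rB iB fin])
  then have "eventually (\<lambda>i. measure M (B i) > measure M (\<Union>S) - e) sequentially"
    using e BU by (intro order_tendstoD(1)) auto
  then obtain i where i: "measure M (B i) > measure M (\<Union>S) - e"
    by (auto simp: eventually_sequentially)
  show ?thesis
    using i gS unfolding B_def by (intro exI[of _ "g ` {..<i}"]) auto
qed




lemma Re_cinner_SI:
  fixes f :: "'a \<Rightarrow> complex^'n"
  assumes "set_integrable M A f"
  shows "Re (cinner w (set_lebesgue_integral M A f)) = set_lebesgue_integral M A (\<lambda>x. Re (cinner w (f x)))"
proof -
  have "Re (cinner w (set_lebesgue_integral M A f)) = (\<integral>x. Re (cinner w (indicator A x *\<^sub>R f x)) \<partial>M)"
    unfolding set_lebesgue_integral_def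
    using integral_bounded_linear[OF bl_Re_cinner[of w], of M "\<lambda>x. indicator A x *\<^sub>R f x"] assms
    unfolding set_integrable_def by simp
  also have "\<dots> = set_lebesgue_integral M A (\<lambda>x. Re (cinner w (f x)))"
    unfolding set_lebesgue_integral_def by (simp add: cinner_scaleR_right)
  finally show ?thesis .
qed

lemma meas_Re_cinner:
  fixes f :: "'a \<Rightarrow> complex^'n"
  assumes "f \<in> borel_measurable M"
  shows "(\<lambda>x. Re (cinner w (f x))) \<in> borel_measurable M"
proof -
  have "continuous_on UNIV (\<lambda>v::complex^'n. Re (cinner w v))"
    using bl_Re_cinner[of w] by (intro linear_continuous_on)
  then have "(\<lambda>v::complex^'n. Re (cinner w v)) \<in> borel_measurable borel"
    by (rule borel_measurable_continuous_onI)
  then show ?thesis using assms by (rule measurable_compose[rotated])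
qed




theorem mainTheorem17:
  fixes M :: "'a::metric_space measure"
    and \<delta> \<eta> a0 a1 cE \<kappa> lam C\<Theta> c :: real
    and D :: "nat \<Rightarrow> 'a set set" and xc :: "nat \<Rightarrow> 'a set \<Rightarrow> 'a"
    and F :: "complex^'n \<Rightarrow> nat \<Rightarrow> 'a set \<Rightarrow> real \<Rightarrow> 'a \<Rightarrow> complex^'n"
  assumes space: "space M = UNIV" and sets: "sets M = sets borel"
    and Eloc: "E_loc M cE \<kappa> lam"
    and dy: "dyadic_structure M \<delta> \<eta> a0 a1 D xc"
    and CTheta: "C\<Theta> > 0" and c: "c > 0"
    and Fmeas: "\<forall>w k Q \<epsilon>. norm w = 1 \<and> Q \<in> D k \<and> \<epsilon> > 0 \<longrightarrow>
        F w k Q \<epsilon> \<in> borel_measurable M \<and> integrable M (\<lambda>x. (norm (F w k Q \<epsilon> x))^2)"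
    and Fnorm: "\<forall>w k Q \<epsilon>. norm w = 1 \<and> Q \<in> D k \<and> \<epsilon> > 0 \<longrightarrow>
        sqrt (\<integral>x. (norm (F w k Q \<epsilon> x))^2 \<partial>M) \<le> c * sqrt (measure M Q)"
    and Favg: "\<forall>w k Q \<epsilon>. norm w = 1 \<and> Q \<in> D k \<and> \<epsilon> > 0 \<longrightarrow>
        norm ((1 / measure M Q) *\<^sub>R (LINT x:Q|M. F w k Q \<epsilon> x) - w) < c * \<epsilon> powr (\<eta> / 2)"
  shows "let a = max 1 (a1 / \<delta>);
             t0 = (if lam = 0 then 1 else min 1 (C\<Theta> / (4 * a^3 * lam)));
             \<epsilon> = (1 / (2 * c)) powr (2 / \<eta>)
         in \<exists>\<alpha>>0. \<exists>\<beta>>0. \<forall>w::complex^'n. norm w = 1 \<longrightarrow>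
              (\<forall>k Q. Q \<in> D k \<and> \<delta>^(Suc k) < t0 \<longrightarrow>
                (\<exists>K. K \<subseteq> {(j, P). P \<in> D j} \<and> (\<forall>(j, P)\<in>K. P \<subseteq> Q) \<and>
                   (\<forall>(j, P)\<in>K. \<forall>(j', P')\<in>K. (j, P) \<noteq> (j', P') \<longrightarrow> P \<inter> P' = {}) \<and>
                   Q - \<Union>(snd ` K) \<in> sets M \<and>
                   measure M (Q - \<Union>(snd ` K)) > \<beta> * measure M Q \<and>
                   (\<forall>k' Q'. Q' \<in> D k' \<and> Q' \<subseteq> Q \<and>
                      tent \<delta> k' Q' \<inter> (tent \<delta> k Q - (\<Union>(j, P)\<in>K. tent \<delta> j P)) \<noteq> {} \<longrightarrow>
                      \<alpha> \<le> Re (cinner w ((1 / measure M Q') *\<^sub>R (LINT x:Q'|M. F w k Q \<epsilon> x))) \<and>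
                      (1 / measure M Q') * (LINT x:Q'|M. norm (F w k Q \<epsilon> x)) \<le> 1 / \<alpha>)))"
proof -
  define \<epsilon> where "\<epsilon> = (1 / (2 * c)) powr (2 / \<eta>)"
  note D = dy[unfolded dyadic_structure_def]
  note C2 = D[THEN conjunct2, THEN conjunct2, THEN conjunct2, THEN conjunct2, THEN conjunct2]
  have \<delta>: "0 < \<delta>" "\<delta> < 1" using D[THEN conjunct1] D[THEN conjunct2, THEN conjunct1] by auto
  have \<eta>: "0 < \<eta>" using D[THEN conjunct2, THEN conjunct2, THEN conjunct1] .
  have a0: "0 < a0" "a0 < a1" using D[THEN conjunct2, THEN conjunct2, THEN conjunct2, THEN conjunct2, THEN conjunct1]
    C2[THEN conjunct1] by auto
  note C7 = C2[THEN conjunct2, THEN conjunct1] and C8 = C2[THEN conjunct2, THEN conjunct2, THEN conjunct1]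
    and C10 = C2[THEN conjunct2, THEN conjunct2, THEN conjunct2, THEN conjunct2, THEN conjunct1]
  have cube: "\<And>k Q. Q \<in> D k \<Longrightarrow> Q \<in> sets M \<and> ball (xc k Q) (a0 * \<delta>^k) \<subseteq> Q \<and> Q \<subseteq> ball (xc k Q) (a1 * \<delta>^k)"
    using C7 by blast
  have ldisj: "\<And>k Q Q'. Q \<in> D k \<Longrightarrow> Q' \<in> D k \<Longrightarrow> Q \<noteq> Q' \<Longrightarrow> Q \<inter> Q' = {}"
    using C8 by blast
  have nest: "\<And>k k' Q Q'. k \<le> k' \<Longrightarrow> Q \<in> D k \<Longrightarrow> Q' \<in> D k' \<Longrightarrow> Q' \<subseteq> Q \<or> Q' \<inter> Q = {}"
    using C10 by blast
  from Eloc have ball_pos: "\<And>x r. r > 0 \<Longrightarrow> 0 < emeasure M (ball x r) \<and> emeasure M (ball x r) < \<infinity>"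
    unfolding E_loc_def by blast
  have ballsets: "ball x r \<in> sets M" for x r using sets by simp
  have cubeM: "P \<in> sets M \<and> emeasure M P < \<infinity> \<and> measure M P > 0" if P: "P \<in> D j" for P j
  proof -
    have r0: "a0 * \<delta>^j > 0" "a1 * \<delta>^j > 0" using a0 \<delta> by auto
    have Ps: "P \<in> sets M" using cube[OF P] by blast
    have "emeasure M P \<le> emeasure M (ball (xc j P) (a1 * \<delta>^j))"
      using cube[OF P] ballsets by (intro emeasure_mono) auto
    then have fin: "emeasure M P < \<infinity>" using ball_pos[OF r0(2)] by (meson le_less_trans)
    have "emeasure M (ball (xc j P) (a0 * \<delta>^j)) \<le> emeasure M P"
      using cube[OF P] Ps by (intro emeasure_mono) auto
    then have "emeasure M P > 0" using ball_pos[OF r0(1)] by (meson less_le_trans)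
    then have "measure M P > 0" using fin
      by (simp add: emeasure_eq_ennreal_measure less_top[symmetric])
    then show ?thesis using Ps fin by blast
  qed
  have \<epsilon>0: "\<epsilon> > 0" unfolding \<epsilon>_def using c by simp
  have c\<epsilon>: "c * \<epsilon> powr (\<eta> / 2) = 1/2"
  proof -
    have "\<epsilon> powr (\<eta> / 2) = (1 / (2 * c)) powr (2 / \<eta> * (\<eta> / 2))"
      unfolding \<epsilon>_def by (simp add: powr_powr)
    also have "2 / \<eta> * (\<eta> / 2) = 1" using \<eta> by simp
    finally show ?thesis using c by simp
  qed
  define \<alpha> where "\<alpha> = min (1/8) (1/(64*c^3))"
  define \<beta> where "\<beta> = 1/(32*c^2)"
  have \<alpha>: "0 < \<alpha>" "\<alpha> \<le> 1/8" "\<alpha> \<le> 1/(64*c^3)" unfolding \<alpha>_def using c by auto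
  have \<beta>: "\<beta> > 0" unfolding \<beta>_def using c by simp
  have MAIN: "\<exists>K. K \<subseteq> {(j, P). P \<in> D j} \<and> (\<forall>(j, P)\<in>K. P \<subseteq> Q) \<and>
                   (\<forall>(j, P)\<in>K. \<forall>(j', P')\<in>K. (j, P) \<noteq> (j', P') \<longrightarrow> P \<inter> P' = {}) \<and>
                   Q - \<Union>(snd ` K) \<in> sets M \<and>
                   measure M (Q - \<Union>(snd ` K)) > \<beta> * measure M Q \<and>
                   (\<forall>k' Q'. Q' \<in> D k' \<and> Q' \<subseteq> Q \<and>
                      tent \<delta> k' Q' \<inter> (tent \<delta> k Q - (\<Union>(j, P)\<in>K. tent \<delta> j P)) \<noteq> {} \<longrightarrow>
                      \<alpha> \<le> Re (cinner w ((1 / measure M Q') *\<^sub>R (LINT x:Q'|M. F w k Q \<epsilon> x))) \<and>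
                      (1 / measure M Q') * (LINT x:Q'|M. norm (F w k Q \<epsilon> x)) \<le> 1 / \<alpha>)"
    if w: "norm w = 1" and Q: "Q \<in> D k" for w :: "complex^'n" and k Q
  proof -
    define f where "f = F w k Q \<epsilon>"
    define g where "g x = Re (cinner w (f x))" for x
    define n where "n x = norm (f x)" for x
    have fm: "f \<in> borel_measurable M" and f2: "integrable M (\<lambda>x. (norm (f x))^2)"
      using Fmeas w Q \<epsilon>0 unfolding f_def by blast+
    have gm: "g \<in> borel_measurable M" unfolding g_def using fm by (rule meas_Re_cinner)
    have nm: "n \<in> borel_measurable M" unfolding n_def using fm by measurable
    have gn: "\<bar>g x\<bar> \<le> n x" for x
      using cinner_norm_bound[of w "f x"] abs_Re_le_cmod[of "cinner w (f x)"] w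
      unfolding g_def n_def by simp
    have nn: "0 \<le> n x" for x unfolding n_def by simp
    have intA: "set_integrable M A g \<and> set_integrable M A n \<and> set_integrable M A (\<lambda>x. (n x)^2) \<and> set_integrable M A f"
      if "A \<in> sets M" "emeasure M A < \<infinity>" for A
    proof (intro conjI)
      show "set_integrable M A g" using set_intg_bound[OF gm f2 _ that] gn unfolding n_def by simp
      show "set_integrable M A n" using set_intg_bound[OF nm f2 _ that] unfolding n_def by simp
      show "set_integrable M A f" using set_intg_bound[OF fm f2 _ that] by simp
      show "set_integrable M A (\<lambda>x. (n x)^2)"
        unfolding set_integrable_def n_def using integrable_mult_indicator[OF that(1) f2] .
    qed
    note QM = cubeM[OF Q]
    have int2: "integrable M (\<lambda>x. (n x)^2)" using f2 unfolding n_def .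
    have tot: "(\<integral>x. (n x)^2 \<partial>M) \<le> c^2 * measure M Q"
    proof -
      have s: "sqrt (\<integral>x. (n x)^2 \<partial>M) \<le> c * sqrt (measure M Q)"
        using Fnorm w Q \<epsilon>0 unfolding f_def n_def by blast
      have i0: "0 \<le> (\<integral>x. (n x)^2 \<partial>M)" by (intro Bochner_Integration.integral_nonneg) simp
      have "(sqrt (\<integral>x. (n x)^2 \<partial>M))^2 \<le> (c * sqrt (measure M Q))^2"
        using s by (intro power_mono) auto
      then show ?thesis using i0 by (simp add: power_mult_distrib)
    qed
    have avg_g: "Re (cinner w ((1 / measure M P) *\<^sub>R (LINT x:P|M. f x))) = (1 / measure M P) * set_lebesgue_integral M P g"
      if "P \<in> sets M" "emeasure M P < \<infinity>" for P
      using Re_cinner_SI[of M P f w] intA[OF that] unfolding g_def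
      by (simp add: cinner_scaleR_right)
    have hQ: "set_lebesgue_integral M Q g > measure M Q / 2"
    proof -
      define v where "v = (1 / measure M Q) *\<^sub>R (LINT x:Q|M. f x)"
      have "norm (v - w) < 1/2"
        using Favg w Q \<epsilon>0 c\<epsilon> unfolding v_def f_def by metis
      have "Re (cinner w v) = Re (cinner w w) + Re (cinner w (v - w))"
        by (simp add: cinner_diff_right)
      moreover have "Re (cinner w w) = 1" using cinner_self_Re[of w] w by simp
      moreover have "\<bar>Re (cinner w (v - w))\<bar> \<le> norm (v - w)"
        using cinner_norm_bound[of w "v - w"] abs_Re_le_cmod[of "cinner w (v - w)"] w by simp
      ultimately have "Re (cinner w v) > 1/2" using \<open>norm (v - w) < 1/2\<close> by linarith
      then have "(1 / measure M Q) * set_lebesgue_integral M Q g > 1/2"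
        using avg_g[of Q] QM unfolding v_def by simp
      then show ?thesis using QM by (simp add: field_simps)
    qed
    define good where "good P \<longleftrightarrow> \<alpha> \<le> Re (cinner w ((1 / measure M P) *\<^sub>R (LINT x:P|M. f x))) \<and>
                      (1 / measure M P) * (LINT x:P|M. norm (f x)) \<le> 1 / \<alpha>" for P
    have badP: "set_lebesgue_integral M P g < \<alpha> * measure M P \<or> measure M P < \<alpha> * set_lebesgue_integral M P n"
      if "P \<in> D j" "\<not> good P" for P j
    proof -
      note PM = cubeM[OF that(1)]
      have "\<not> \<alpha> \<le> (1 / measure M P) * set_lebesgue_integral M P g \<or> \<not> (1 / measure M P) * set_lebesgue_integral M P n \<le> 1 / \<alpha>"
        using that(2) avg_g[of P] PM unfolding good_def n_def by auto
      then show ?thesis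
      proof
        assume "\<not> \<alpha> \<le> (1 / measure M P) * set_lebesgue_integral M P g"
        then show ?thesis using PM by (simp add: field_simps)
      next
        assume "\<not> (1 / measure M P) * set_lebesgue_integral M P n \<le> 1 / \<alpha>"
        then show ?thesis using PM \<alpha>(1) by (simp add: field_simps)
      qed
    qed
    define B where "B = {(j, P). P \<in> D j \<and> P \<subseteq> Q \<and> \<not> good P}"
    define K where "K = {(j, P). (j, P) \<in> B \<and> (\<forall>j' P'. (j', P') \<in> B \<and> j' < j \<longrightarrow> \<not> P \<subseteq> P')}"
    have KB: "K \<subseteq> B" unfolding K_def by auto
    have K1: "K \<subseteq> {(j, P). P \<in> D j}" unfolding K_def B_def by auto
    have K2: "\<forall>(j, P)\<in>K. P \<subseteq> Q" unfolding K_def B_def by auto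
    have K3: "P \<inter> P' = {}" if "(j, P) \<in> K" "(j', P') \<in> K" "(j, P) \<noteq> (j', P')" for j P j' P'
    proof -
      have PD: "P \<in> D j" "P' \<in> D j'" using that K1 by auto
      consider "j = j'" | "j < j'" | "j' < j" by linarith
      then show ?thesis
      proof cases
        case 1 then show ?thesis using that PD ldisj by auto
      next
        case 2
        then have "P' \<subseteq> P \<or> P' \<inter> P = {}" using nest[of j j' P P'] PD by simp
        moreover have "\<not> P' \<subseteq> P" using that(1,2) 2 unfolding K_def by auto
        ultimately show ?thesis by auto
      next
        case 3
        then have "P \<subseteq> P' \<or> P \<inter> P' = {}" using nest[of j' j P' P] PD by simp
        moreover have "\<not> P \<subseteq> P'" using that(1,2) 3 unfolding K_def by auto
        ultimately show ?thesis by auto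
      qed
    qed
    define S where "S = snd ` K"
    have SP: "P \<in> sets M \<and> P \<subseteq> Q \<and> measure M P > 0 \<and> emeasure M P < \<infinity> \<and>
        (set_lebesgue_integral M P g < \<alpha> * measure M P \<or> measure M P < \<alpha> * set_lebesgue_integral M P n)"
      if PS: "P \<in> S" for P
    proof -
      obtain j where jP: "(j, P) \<in> K" using PS unfolding S_def by force
      then have "P \<in> D j" "P \<subseteq> Q" "\<not> good P" using KB unfolding B_def by auto
      then show ?thesis using cubeM badP by blast
    qed
    have Sdisj: "pairwise disjnt S"
      unfolding pairwise_def disjnt_def
    proof (intro ballI impI)
      fix P P' assume "P \<in> S" "P' \<in> S" "P \<noteq> P'"
      then obtain j j' where "(j, P) \<in> K" "(j', P') \<in> K" unfolding S_def by force
      then show "P \<inter> P' = {}" using K3 \<open>P \<noteq> P'\<close> by blast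
    qed
    have cS: "countable S"
      using Sdisj SP QM by (intro countable_pos_disjoint[of S M Q]) auto
    have USs: "\<Union>S \<in> sets M" using cS SP by (intro sets.countable_Union) auto
    have US: "\<Union>(snd ` K) = \<Union>S" unfolding S_def ..
    have K4: "Q - \<Union>(snd ` K) \<in> sets M" using US USs QM by auto
    have K5: "measure M (Q - \<Union>(snd ` K)) > \<beta> * measure M Q"
    proof -
      define e where "e = measure M Q / (32 * c^2)"
      have e0: "e > 0" unfolding e_def using QM c by simp
      obtain F' where F': "F' \<subseteq> S" "finite F'" "measure M (\<Union>S) < measure M (\<Union>F') + e"
        using approx_union[OF cS _ _ _ e0, of M Q] SP QM by blast
      have "measure M (Q - \<Union>F') > measure M Q / (16*c^2)"
      proof (rule finite_step[where g=g and n=n and c=c and \<alpha>=\<alpha>])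
        show "\<And>x. 0 \<le> n x" by (rule nn)
        show "\<And>x. g x \<le> n x" using gn by (simp add: abs_le_iff)
        show "\<And>A. A \<in> sets M \<Longrightarrow> emeasure M A < \<infinity> \<Longrightarrow>
          set_integrable M A g \<and> set_integrable M A n \<and> set_integrable M A (\<lambda>x. (n x)^2)"
          using intA by blast
        show "pairwise disjnt F'" using Sdisj F'(1) by (rule pairwise_subset)
        show "\<And>P. P \<in> F' \<Longrightarrow> P \<in> sets M \<and> P \<subseteq> Q" using F'(1) SP by blast
        show "\<And>P. P \<in> F' \<Longrightarrow> set_lebesgue_integral M P g < \<alpha> * measure M P \<or>
                              measure M P < \<alpha> * set_lebesgue_integral M P n" using F'(1) SP by blast
      qed (use int2 tot c QM hQ F'(2) \<alpha> in auto)
      moreover have "measure M (Q - \<Union>F') = measure M Q - measure M (\<Union>F')"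
        using F' SP QM by (intro measurable_measure_Diff) (auto simp: fmeasurable_def)
      moreover have "measure M (Q - \<Union>S) = measure M Q - measure M (\<Union>S)"
        using USs SP QM by (intro measurable_measure_Diff) (auto simp: fmeasurable_def)
      moreover have "measure M Q / (16*c^2) - e = \<beta> * measure M Q"
        unfolding e_def \<beta>_def using c by (simp add: field_simps)
      ultimately have "\<beta> * measure M Q < measure M (Q - \<Union>S)" using F'(3) by linarith
      then show ?thesis unfolding US .
    qed
    have K6: "\<alpha> \<le> Re (cinner w ((1 / measure M Q') *\<^sub>R (LINT x:Q'|M. F w k Q \<epsilon> x))) \<and>
              (1 / measure M Q') * (LINT x:Q'|M. norm (F w k Q \<epsilon> x)) \<le> 1 / \<alpha>"
      if Q': "Q' \<in> D k'" "Q' \<subseteq> Q"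
        and T: "tent \<delta> k' Q' \<inter> (tent \<delta> k Q - (\<Union>(j, P)\<in>K. tent \<delta> j P)) \<noteq> {}" for k' Q'
    proof -
      obtain x t where xt: "(x, t) \<in> tent \<delta> k' Q'" "(x, t) \<notin> (\<Union>(j, P)\<in>K. tent \<delta> j P)"
        using T by auto
      have x: "x \<in> Q'" and t: "0 < t" "t \<le> \<delta>^k'" using xt(1) unfolding tent_def by auto
      have "good Q'"
      proof (rule ccontr)
        assume ng: "\<not> good Q'"
        define J where "J = {j. \<exists>P. (j, P) \<in> B \<and> Q' \<subseteq> P}"
        have "k' \<in> J" unfolding J_def B_def using Q' ng by auto
        define j0 where "j0 = (LEAST j. j \<in> J)"
        have "j0 \<in> J" unfolding j0_def using \<open>k' \<in> J\<close> by (rule LeastI)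
        then obtain P0 where P0: "(j0, P0) \<in> B" "Q' \<subseteq> P0" unfolding J_def by auto
        have j0k: "j0 \<le> k'" unfolding j0_def using \<open>k' \<in> J\<close> by (rule Least_le)
        have "(j0, P0) \<in> K"
          unfolding K_def
        proof (clarsimp simp: P0(1))
          fix j' P' assume "(j', P') \<in> B" "j' < j0" "P0 \<subseteq> P'"
          then have "j' \<in> J" unfolding J_def using P0(2) by auto
          then have "j0 \<le> j'" unfolding j0_def by (rule Least_le)
          with \<open>j' < j0\<close> show False by simp
        qed
        moreover have "(x, t) \<in> tent \<delta> j0 P0"
        proof -
          have "\<delta>^k' \<le> \<delta>^j0" using j0k \<delta> by (intro power_decreasing) auto
          then show ?thesis unfolding tent_def using x P0(2) t by auto
        qed
        ultimately show False using xt(2) by auto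
      qed
      then show ?thesis unfolding good_def f_def .
    qed
    show ?thesis
    proof (intro exI[of _ K] conjI)
      show "K \<subseteq> {(j, P). P \<in> D j}" by (rule K1)
      show "\<forall>(j, P)\<in>K. P \<subseteq> Q" by (rule K2)
      show "\<forall>(j, P)\<in>K. \<forall>(j', P')\<in>K. (j, P) \<noteq> (j', P') \<longrightarrow> P \<inter> P' = {}"
      proof (intro ballI)
        fix p assume pK: "p \<in> K"
        obtain j P where p: "p = (j, P)" by (cases p)
        show "case p of (j, P) \<Rightarrow> \<forall>(j', P')\<in>K. (j, P) \<noteq> (j', P') \<longrightarrow> P \<inter> P' = {}"
          unfolding p prod.case
        proof (intro ballI)
          fix q assume qK: "q \<in> K"
          obtain j' P' where q: "q = (j', P')" by (cases q)
          show "case q of (j', P') \<Rightarrow> (j, P) \<noteq> (j', P') \<longrightarrow> P \<inter> P' = {}"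
            unfolding q prod.case using K3[of j P j' P'] pK qK p q by blast
        qed
      qed
      show "Q - \<Union>(snd ` K) \<in> sets M" by (rule K4)
      show "measure M (Q - \<Union>(snd ` K)) > \<beta> * measure M Q" by (rule K5)
      show "\<forall>k' Q'. Q' \<in> D k' \<and> Q' \<subseteq> Q \<and>
                      tent \<delta> k' Q' \<inter> (tent \<delta> k Q - (\<Union>(j, P)\<in>K. tent \<delta> j P)) \<noteq> {} \<longrightarrow>
                      \<alpha> \<le> Re (cinner w ((1 / measure M Q') *\<^sub>R (LINT x:Q'|M. F w k Q \<epsilon> x))) \<and>
                      (1 / measure M Q') * (LINT x:Q'|M. norm (F w k Q \<epsilon> x)) \<le> 1 / \<alpha>"
      proof (intro allI impI)
        fix k' Q' assume H: "Q' \<in> D k' \<and> Q' \<subseteq> Q \<and>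
                      tent \<delta> k' Q' \<inter> (tent \<delta> k Q - (\<Union>(j, P)\<in>K. tent \<delta> j P)) \<noteq> {}"
        then show "\<alpha> \<le> Re (cinner w ((1 / measure M Q') *\<^sub>R (LINT x:Q'|M. F w k Q \<epsilon> x))) \<and>
                      (1 / measure M Q') * (LINT x:Q'|M. norm (F w k Q \<epsilon> x)) \<le> 1 / \<alpha>"
          using K6[of Q' k'] by blast
      qed
    qed
  qed
  show ?thesis
    unfolding Let_def \<epsilon>_def[symmetric]
    apply (rule exI[of _ \<alpha>])
    apply (rule conjI[OF \<alpha>(1)])
    apply (rule exI[of _ \<beta>])
    apply (rule conjI[OF \<beta>])
    apply (intro allI impI)
    apply (rule MAIN)
     apply assumption
    apply (erule conjunct1)
    done
qed


end
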